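(* There exists a constant $T^*>0$ such that every arc $\mathcal Z$ of a billiard trajectory in $D$ with winding number $k\in\mathbb{Z}\setminus\{0\}$ and endpoints $\mathcal Z(t_0)=(x_0,-L)$, $\mathcal Z(t_1)=(x_1,-L)\in\ell'$ has travel time $|t_1-t_0|\le T^*$; that is, the travel time is bounded uniformly in $x_0$, $x_1$ and $k$.
   Context: Fix $L,h,\beta>0$; $V_\beta(z)=-\frac1{|z|}-\frac{\beta}{|z|^2}$; $\ell=\{y=-L\}$, $\mathcal P=\{y>-L\}$. Winding number of an arc $u$ from $\ell$ to $\ell$ in $\mathcal P\setminus\{0\}$ in between: winding number around $0$ of $u$ concatenated with the oriented segment from its final to its initial point. $\hat{\mathcal Z}$ is a fixed solution of $\ddot z=-\nabla V_\beta(z)$ at energy $h$ ($\frac12|\dot z|^2+V_\beta(z)=h$) meeting $\ell$ at times $\tau_0<\tau_1$, in $\mathcal P$ on $(\tau_0,\tau_1)$, of winding number $1$, with the angle between $\dot{\hat{\mathcal Z}}(\tau_0)$ and $(1,0)$ less than $\pi/2$ and that between $(-1,0)$ and $\dot{\hat{\mathcal Z}}(\tau_1)$ greater than $\pi/2$; $\ell'$ is the segment of $\ell$ between $\hat{\mathcal Z}(\tau_0),\hat{\mathcal Z}(\tau_1)$ and $D$ the compact region bounded by $\hat{\mathcal Z}([\tau_0,\tau_1])$ and $\ell'$. An arc of a billiard trajectory is a collision-free solution of the equations of motion at energy $h$ between two consecutive hits of $\ell$. *)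

theory Defs
  imports "HOL-Complex_Analysis.Complex_Analysis"
begin

text \<open>The plane is identified with the complex numbers: the point (x,y) is x + i y.\<close>

definition Vb :: "real \<Rightarrow> complex \<Rightarrow> real" where
  "Vb \<beta> z = - 1 / norm z - \<beta> / (norm z)\<^sup>2"

text \<open>Collision-free solution of z'' = - grad V_beta(z) at energy h on the interval [a,b].
  The gradient is expressed via the Frechet derivative: dV(z) v = inner (grad V z) v.\<close>
definition is_solution :: "real \<Rightarrow> real \<Rightarrow> (real \<Rightarrow> complex) \<Rightarrow> real \<Rightarrow> real \<Rightarrow> bool" where
  "is_solution \<beta> h z a b \<longleftrightarrow> a < b \<and> (\<forall>t\<in>{a..b}. z t \<noteq> 0) \<and>
     (\<exists>z' z''. \<forall>t\<in>{a..b}.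
        (z has_vector_derivative z' t) (at t within {a..b}) \<and>
        (z' has_vector_derivative z'' t) (at t within {a..b}) \<and>
        (Vb \<beta> has_derivative (\<lambda>v. inner (- z'' t) v)) (at (z t)) \<and>
        (1/2) * (norm (z' t))\<^sup>2 + Vb \<beta> (z t) = h)"

definition billiard_arc :: "real \<Rightarrow> real \<Rightarrow> real \<Rightarrow> (real \<Rightarrow> complex) \<Rightarrow> real \<Rightarrow> real \<Rightarrow> bool" where
  "billiard_arc \<beta> h L z t0 t1 \<longleftrightarrow> is_solution \<beta> h z t0 t1 \<and>
     Im (z t0) = - L \<and> Im (z t1) = - L \<and> (\<forall>t\<in>{t0<..<t1}. Im (z t) > - L)"

definition arc_path :: "(real \<Rightarrow> complex) \<Rightarrow> real \<Rightarrow> real \<Rightarrow> real \<Rightarrow> complex" where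
  "arc_path z t0 t1 = (\<lambda>s. z (t0 + s * (t1 - t0)))"

definition closed_arc :: "(real \<Rightarrow> complex) \<Rightarrow> real \<Rightarrow> real \<Rightarrow> real \<Rightarrow> complex" where
  "closed_arc z t0 t1 = arc_path z t0 t1 +++ linepath (z t1) (z t0)"

definition arc_winding :: "(real \<Rightarrow> complex) \<Rightarrow> real \<Rightarrow> real \<Rightarrow> complex" where
  "arc_winding z t0 t1 = winding_number (closed_arc z t0 t1) 0"

definition vang :: "complex \<Rightarrow> complex \<Rightarrow> real" where
  "vang u v = arccos (inner u v / (norm u * norm v))"

end

theory Submission
  imports Defs
begin



lemma Vb_inner:
  fixes w :: complex
  assumes w: "w \<noteq> 0" and D: "(Vb \<beta> has_derivative (\<lambda>v. inner (- a) v)) (at w)"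
  shows "inner (- a) w = 1 / norm w + 2 * \<beta> / (norm w)^2"
proof -
  define r where "r = norm w"
  have r: "r > 0" using w by (simp add: r_def)
  define g where "g = (\<lambda>x::real. - 1 / x - \<beta> / x\<^sup>2)"
  define g' where "g' = 1 / r^2 + 2 * \<beta> / r^3"
  have "(g has_real_derivative g') (at r)"
    unfolding g_def g'_def using r
    by (auto intro!: derivative_eq_intros simp: power2_eq_square power3_eq_cube field_simps)
  hence gd: "(g has_derivative (\<lambda>x. g' * x)) (at (norm w))"
    by (simp add: has_field_derivative_def r_def)
  have "((\<lambda>x. g (norm x)) has_derivative (\<lambda>x. g' * inner x (sgn w))) (at w)"
    using has_derivative_compose[OF has_derivative_norm[OF w] gd] by simp
  moreover have "(\<lambda>x. g (norm x)) = Vb \<beta>" by (auto simp: g_def Vb_def fun_eq_iff)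
  ultimately have "(\<lambda>v. inner (- a) v) = (\<lambda>x. g' * inner x (sgn w))"
    using D has_derivative_unique by metis
  hence "inner (- a) w = g' * inner w (sgn w)" by metis
  also have "inner w (sgn w) = r"
    using w by (simp add: sgn_div_norm r_def inner_commute power2_norm_eq_inner[symmetric] power2_eq_square)
  finally have e: "inner (- a) w = g' * r" .
  have "g' * r = 1/r + 2*\<beta>/r^2" using r by (simp add: g'_def field_simps power2_eq_square power3_eq_cube)
  thus ?thesis using e by (simp add: r_def)
qed

lemma deriv_sub:
  fixes q q' :: "real \<Rightarrow> real"
  assumes d: "\<And>t. t \<in> {a..b} \<Longrightarrow> (q has_real_derivative q' t) (at t within {a..b})"
    and "a \<le> x" "y \<le> b" "t \<in> {x..y}"
  shows "(q has_derivative (\<lambda>h. q' t * h)) (at t within {x..y})"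
proof -
  have t: "t \<in> {a..b}" using assms by auto
  have sub: "{x..y} \<subseteq> {a..b}" using assms by auto
  have "(q has_real_derivative q' t) (at t within {x..y})"
    by (rule has_field_derivative_subset[OF d[OF t] sub])
  thus ?thesis by (simp add: has_field_derivative_def)
qed

lemma convex_mid:
  fixes p p' p'' :: "real \<Rightarrow> real"
  assumes ab: "a < b"
    and d1: "\<And>t. t \<in> {a..b} \<Longrightarrow> (p has_real_derivative p' t) (at t within {a..b})"
    and d2: "\<And>t. t \<in> {a..b} \<Longrightarrow> (p' has_real_derivative p'' t) (at t within {a..b})"
    and pos: "\<And>t. t \<in> {a..b} \<Longrightarrow> p'' t \<ge> 0"
  shows "2 * p ((a+b)/2) \<le> p a + p b"
proof -
  have mono: "p' x \<le> p' y" if "a \<le> x" "x \<le> y" "y \<le> b" for x y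
  proof -
    have "\<exists>s\<in>{x..y}. p' y - p' x = (\<lambda>h. p'' s * h) (y - x)"
      by (rule mvt_very_simple[OF that(2)], rule deriv_sub[OF d2 that(1) that(3)], auto)
    then obtain s where "s \<in> {x..y}" "p' y - p' x = p'' s * (y - x)" by auto
    moreover have "p'' s \<ge> 0" using pos \<open>s \<in> {x..y}\<close> that by auto
    ultimately have "0 \<le> p'' s * (y - x)" "p' y - p' x = p'' s * (y - x)" using that by simp_all
    thus ?thesis by linarith
  qed
  define m where "m = (a+b)/2"
  have am: "a \<le> m" "m \<le> b" using ab by (auto simp: m_def)
  have "\<exists>s\<in>{a..m}. p m - p a = (\<lambda>h. p' s * h) (m - a)"
    by (rule mvt_very_simple[OF am(1)], rule deriv_sub[OF d1 order_refl am(2)], auto)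
  then obtain s1 where s1: "s1 \<in> {a..m}" "p m - p a = p' s1 * (m - a)" by auto
  have "\<exists>s\<in>{m..b}. p b - p m = (\<lambda>h. p' s * h) (b - m)"
    by (rule mvt_very_simple[OF am(2)], rule deriv_sub[OF d1 am(1) order_refl], auto)
  then obtain s2 where s2: "s2 \<in> {m..b}" "p b - p m = p' s2 * (b - m)" by auto
  have le: "p' s1 \<le> p' s2" using mono s1 s2 am by auto
  have e: "m - a = b - m" "m - a \<ge> 0" using ab by (auto simp: m_def field_simps)
  have "p' s1 * (m - a) \<le> p' s2 * (m - a)" using le e by (simp add: mult_right_mono)
  hence "p m - p a \<le> p b - p m" using s1 s2 e by simp
  thus ?thesis by (simp add: m_def)
qed

lemma seg_norm:
  assumes "x \<in> closed_segment a b" shows "norm (x::complex) \<le> 2 * (norm a + norm b)"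
proof -
  have "norm (x - a) \<le> norm (b - a)" using segment_bound1[OF assms] .
  hence "norm x \<le> norm a + norm (b - a)" by (metis norm_triangle_sub order_trans add_left_mono add.commute)
  moreover have "norm (b - a) \<le> norm a + norm b" by (metis norm_triangle_ineq4 add.commute)
  ultimately show ?thesis using norm_ge_zero[of b] norm_ge_zero[of a] by (smt (verit))
qed

lemma arc_time_bound:
  assumes h: "h > 0" and arc: "is_solution \<beta> h z a b"
    and za: "norm (z a) \<le> M" and zb: "norm (z b) \<le> M"
  shows "h * (b - a)^2 \<le> 2 * M^2"
proof -
  from arc obtain z' z'' where ab: "a < b" and nz: "\<forall>t\<in>{a..b}. z t \<noteq> 0" and
    S: "\<forall>t\<in>{a..b}. (z has_vector_derivative z' t) (at t within {a..b}) \<and>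
        (z' has_vector_derivative z'' t) (at t within {a..b}) \<and>
        (Vb \<beta> has_derivative (\<lambda>v. inner (- z'' t) v)) (at (z t)) \<and>
        (1/2) * (norm (z' t))\<^sup>2 + Vb \<beta> (z t) = h"
    unfolding is_solution_def by blast
  define p where "p t = inner (z t) (z t) - 2 * h * t^2" for t
  define p' where "p' t = 2 * inner (z t) (z' t) - 4 * h * t" for t
  define p'' where "p'' t = 2 * (inner (z' t) (z' t) + inner (z t) (z'' t)) - 4 * h" for t
  have d1: "(p has_real_derivative p' t) (at t within {a..b})" if t: "t \<in> {a..b}" for t
  proof -
    have zd: "(z has_derivative (\<lambda>s. s *\<^sub>R z' t)) (at t within {a..b})"
      using S t by (simp add: has_vector_derivative_def)
    show ?thesis unfolding p_def p'_def has_field_derivative_def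
      by (rule derivative_eq_intros zd | simp)+
        (auto simp: fun_eq_iff inner_commute algebra_simps)
  qed
  have d2: "(p' has_real_derivative p'' t) (at t within {a..b})" if t: "t \<in> {a..b}" for t
  proof -
    have zd: "(z has_derivative (\<lambda>s. s *\<^sub>R z' t)) (at t within {a..b})"
      using S t by (simp add: has_vector_derivative_def)
    have zd': "(z' has_derivative (\<lambda>s. s *\<^sub>R z'' t)) (at t within {a..b})"
      using S t by (simp add: has_vector_derivative_def)
    show ?thesis unfolding p''_def p'_def has_field_derivative_def
      by (rule derivative_eq_intros zd zd' | simp)+
        (auto simp: fun_eq_iff inner_commute algebra_simps)
  qed
  have pos: "p'' t \<ge> 0" if t: "t \<in> {a..b}" for t
  proof -
    define r where "r = norm (z t)"
    have r: "r > 0" using nz t by (simp add: r_def)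
    have vi: "inner (- z'' t) (z t) = 1 / r + 2 * \<beta> / r^2"
      using Vb_inner[of "z t" \<beta> "z'' t"] S t nz r_def by auto
    have en: "inner (z' t) (z' t) = 2 * h + 2 / r + 2 * \<beta> / r^2"
      using S t by (auto simp: Vb_def r_def power2_norm_eq_inner[symmetric] algebra_simps)
    have vi2: "inner (z t) (z'' t) = - (1 / r + 2 * \<beta> / r^2)"
      using vi by (simp add: inner_commute)
    have "p'' t = 2 / r"
      unfolding p''_def vi2 en by (simp add: algebra_simps)
    thus ?thesis using r h by simp
  qed
  have cm: "2 * p ((a+b)/2) \<le> p a + p b"
    by (rule convex_mid[OF ab d1 d2 pos])
  define m where "m = (a+b)/2"
  have key: "p a + p b - 2 * p m = (inner (z a) (z a) + inner (z b) (z b) - 2 * inner (z m) (z m)) - h * (b - a)^2"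
    unfolding p_def m_def by (simp add: power2_eq_square field_simps)
  have "inner (z m) (z m) \<ge> 0" by simp
  moreover have "inner (z a) (z a) \<le> M^2" "inner (z b) (z b) \<le> M^2"
    using za zb by (auto simp: power2_norm_eq_inner[symmetric] intro!: power_mono)
  ultimately show ?thesis using cm key unfolding m_def by linarith
qed


theorem proposition3p6:
  fixes L h \<beta> \<tau>0 \<tau>1 :: real and Zh :: "real \<Rightarrow> complex"
  assumes "L > 0" and "h > 0" and "\<beta> > 0"
    and Zh_arc: "billiard_arc \<beta> h L Zh \<tau>0 \<tau>1"
    and Zh_wind: "arc_winding Zh \<tau>0 \<tau>1 = 1"
    and Zh_ang0: "vang (vector_derivative Zh (at \<tau>0 within {\<tau>0..\<tau>1})) 1 < pi / 2"
    and Zh_ang1: "vang (-1) (vector_derivative Zh (at \<tau>1 within {\<tau>0..\<tau>1})) > pi / 2"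
  defines "l' \<equiv> closed_segment (Zh \<tau>0) (Zh \<tau>1)"
    and "D \<equiv> path_image (closed_arc Zh \<tau>0 \<tau>1) \<union> inside (path_image (closed_arc Zh \<tau>0 \<tau>1))"
  shows "\<exists>T>0. \<forall>z t0 t1.
           billiard_arc \<beta> h L z t0 t1 \<and> (\<forall>t\<in>{t0..t1}. z t \<in> D) \<and>
           (\<exists>k::int. k \<noteq> 0 \<and> arc_winding z t0 t1 = of_int k) \<and>
           z t0 \<in> l' \<and> z t1 \<in> l'
           \<longrightarrow> \<bar>t1 - t0\<bar> \<le> T"
  proof -
  define M where "M = 2 * (norm (Zh \<tau>0) + norm (Zh \<tau>1))"
  have M0: "M \<ge> 0" by (simp add: M_def)
  show ?thesis
  proof (intro exI[of _ "1 + 2 * M^2 / h"] conjI allI impI)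
    show "0 < 1 + 2 * M^2 / h" using \<open>h > 0\<close> by (simp add: add_pos_nonneg)
  next
    fix z t0 t1
    assume A: "billiard_arc \<beta> h L z t0 t1 \<and> (\<forall>t\<in>{t0..t1}. z t \<in> D) \<and>
           (\<exists>k::int. k \<noteq> 0 \<and> arc_winding z t0 t1 = of_int k) \<and>
           z t0 \<in> l' \<and> z t1 \<in> l'"
    hence sol: "is_solution \<beta> h z t0 t1" by (simp add: billiard_arc_def)
    hence lt: "t0 < t1" by (simp add: is_solution_def)
    have s0: "z t0 \<in> closed_segment (Zh \<tau>0) (Zh \<tau>1)" using A l'_def by simp
    have s1: "z t1 \<in> closed_segment (Zh \<tau>0) (Zh \<tau>1)" using A l'_def by simp
    have n0: "norm (z t0) \<le> M" using seg_norm[OF s0] by (simp add: M_def)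
    have n1: "norm (z t1) \<le> M" using seg_norm[OF s1] by (simp add: M_def)
    have hb: "h * (t1 - t0)^2 \<le> 2 * M^2" by (rule arc_time_bound[OF \<open>h > 0\<close> sol n0 n1])
    have q: "(t1 - t0)^2 \<le> 2 * M^2 / h" using hb \<open>h > 0\<close> by (simp add: field_simps)
    have "t1 - t0 \<le> 1 + 2 * M^2 / h"
    proof (cases "t1 - t0 \<le> 1")
      case True thus ?thesis using \<open>h > 0\<close> by (smt (verit) divide_nonneg_pos zero_le_power2)
    next
      case False
      hence "t1 - t0 \<le> (t1 - t0)^2" by (simp add: power2_eq_square)
      thus ?thesis using q by linarith
    qed
    thus "\<bar>t1 - t0\<bar> \<le> 1 + 2 * M^2 / h" using lt by simp
  qed
qed

end
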